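(* Let $L$ be a PG-lattice and $M$ a faithful multiplication PG-lattice $L$-module with $I_M$ compact. Let $N$ be a proper element of $M$ and $\delta_L$ an expansion function on $L$. Then the following are equivalent: (1) $N$ is a $\delta_L$-primary element of $M$; (2) $(N:I_M)$ is a $\delta_L$-primary element of $L$; (3) $N=qI_M$ for some $\delta_L$-primary element $q\in L$.
   Context: $L$ is a multiplicative lattice (complete lattice with commutative, associative multiplication distributing over arbitrary joins, identity $1$, least $0$), compactly generated, $1$ compact, finite products of compact elements compact. An $L$-module is a complete lattice $M$ (least $O_M$, greatest $I_M$) with product $aB\in M$ satisfying $(\bigvee a_\alpha)A=\bigvee(a_\alpha A)$, $a(\bigvee A_\alpha)=\bigvee(aA_\alpha)$, $(ab)A=a(bA)$, $1A=A$, $0A=O_M$. $(A:B)=\bigvee\{x\in L:xB\leqslant A\}$ for $A,B\in M$. $e\in L$ is principal if $a\wedge be=((a:e)\wedge b)e$ and $(ae\vee b):e=(b:e)\vee a$ for all $a,b$; $L$ is a PG-lattice if every element is a join of principal elements. $N\in M$ is principal if $(b\wedge(B:N))N=bN\wedge B$ and $b\vee(B:N)=((bN\vee B):N)$ for all $b\in L,B\in M$; $M$ is a PG-lattice module if every element is a join of principal elements. $M$ is faithful if $(O_M:I_M)=0$; a multiplication module if every element of $M$ is $aI_M$ for some $a\in L$. An expansion function on $L$ is a map $\delta_L:L\to L$ with $a\leqslant\delta_L(a)$ and $a\leqslant b\Rightarrow\delta_L(a)\leqslant\delta_L(b)$. A proper element $p<1$ of $L$ is $\delta_L$-primary if for $a,b\in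 L$, $ab\leqslant p$ implies $a\leqslant p$ or $b\leqslant\delta_L(p)$. A proper element $P<I_M$ of $M$ is $\delta_L$-primary if for all $A\in M$, $a\in L$, $aA\leqslant P$ implies $A\leqslant P$ or $a\leqslant\delta_L((P:I_M))$. *)

theory Defs
  imports Main
begin

text \<open>Multiplicative lattices are modelled as a complete lattice type 'a together with a
  multiplication operation mult; the multiplicative identity 1 is the top element.\<close>

definition compact_el :: "'a::complete_lattice \<Rightarrow> bool" where
  "compact_el x \<longleftrightarrow> (\<forall>S. x \<le> Sup S \<longrightarrow> (\<exists>F. F \<subseteq> S \<and> finite F \<and> x \<le> Sup F))"

definition mult_lattice :: "('a::complete_lattice \<Rightarrow> 'a \<Rightarrow> 'a) \<Rightarrow> bool" where
  "mult_lattice mult \<longleftrightarrow>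
     (\<forall>a b. mult a b = mult b a) \<and>
     (\<forall>a b c. mult (mult a b) c = mult a (mult b c)) \<and>
     (\<forall>a S. mult a (Sup S) = Sup (mult a ` S)) \<and>
     (\<forall>a. mult top a = a)"

definition std_mult_lattice :: "('a::complete_lattice \<Rightarrow> 'a \<Rightarrow> 'a) \<Rightarrow> bool" where
  "std_mult_lattice mult \<longleftrightarrow>
     mult_lattice mult \<and>
     (\<forall>x::'a. \<exists>S. (\<forall>s\<in>S. compact_el s) \<and> x = Sup S) \<and>
     compact_el (top::'a) \<and>
     (\<forall>a b. compact_el a \<longrightarrow> compact_el b \<longrightarrow> compact_el (mult a b))"

definition lattice_module ::
  "('a::complete_lattice \<Rightarrow> 'a \<Rightarrow> 'a) \<Rightarrow> ('a \<Rightarrow> 'm::complete_lattice \<Rightarrow> 'm) \<Rightarrow> bool" where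
  "lattice_module mult act \<longleftrightarrow>
     (\<forall>S A. act (Sup S) A = Sup ((\<lambda>a. act a A) ` S)) \<and>
     (\<forall>a T. act a (Sup T) = Sup (act a ` T)) \<and>
     (\<forall>a b A. act (mult a b) A = act a (act b A)) \<and>
     (\<forall>A. act top A = A) \<and>
     (\<forall>A. act bot A = bot)"

definition colonL :: "('a::complete_lattice \<Rightarrow> 'a \<Rightarrow> 'a) \<Rightarrow> 'a \<Rightarrow> 'a \<Rightarrow> 'a" where
  "colonL mult a b = Sup {x. mult x b \<le> a}"

definition colonM :: "('a::complete_lattice \<Rightarrow> 'm::complete_lattice \<Rightarrow> 'm) \<Rightarrow> 'm \<Rightarrow> 'm \<Rightarrow> 'a" where
  "colonM act A B = Sup {x. act x B \<le> A}"

definition principalL :: "('a::complete_lattice \<Rightarrow> 'a \<Rightarrow> 'a) \<Rightarrow> 'a \<Rightarrow> bool" where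
  "principalL mult e \<longleftrightarrow>
     (\<forall>a b. inf a (mult b e) = mult (inf (colonL mult a e) b) e) \<and>
     (\<forall>a b. colonL mult (sup (mult a e) b) e = sup (colonL mult b e) a)"

definition PG_lattice :: "('a::complete_lattice \<Rightarrow> 'a \<Rightarrow> 'a) \<Rightarrow> bool" where
  "PG_lattice mult \<longleftrightarrow> (\<forall>x. \<exists>S. (\<forall>s\<in>S. principalL mult s) \<and> x = Sup S)"

definition principalM :: "('a::complete_lattice \<Rightarrow> 'm::complete_lattice \<Rightarrow> 'm) \<Rightarrow> 'm \<Rightarrow> bool" where
  "principalM act N \<longleftrightarrow>
     (\<forall>b B. act (inf b (colonM act B N)) N = inf (act b N) B) \<and>
     (\<forall>b B. sup b (colonM act B N) = colonM act (sup (act b N) B) N)"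

definition PG_module :: "('a::complete_lattice \<Rightarrow> 'm::complete_lattice \<Rightarrow> 'm) \<Rightarrow> bool" where
  "PG_module act \<longleftrightarrow> (\<forall>X. \<exists>S. (\<forall>s\<in>S. principalM act s) \<and> X = Sup S)"

definition faithful :: "('a::complete_lattice \<Rightarrow> 'm::complete_lattice \<Rightarrow> 'm) \<Rightarrow> bool" where
  "faithful act \<longleftrightarrow> colonM act bot top = bot"

definition multiplication_module :: "('a::complete_lattice \<Rightarrow> 'm::complete_lattice \<Rightarrow> 'm) \<Rightarrow> bool" where
  "multiplication_module act \<longleftrightarrow> (\<forall>A. \<exists>a. A = act a top)"

definition expansion_fun :: "('a::complete_lattice \<Rightarrow> 'a) \<Rightarrow> bool" where
  "expansion_fun \<delta> \<longleftrightarrow> (\<forall>a. a \<le> \<delta> a) \<and> (\<forall>a b. a \<le> b \<longrightarrow> \<delta> a \<le> \<delta> b)"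

definition delta_primaryL :: "('a::complete_lattice \<Rightarrow> 'a \<Rightarrow> 'a) \<Rightarrow> ('a \<Rightarrow> 'a) \<Rightarrow> 'a \<Rightarrow> bool" where
  "delta_primaryL mult \<delta> p \<longleftrightarrow>
     p < top \<and> (\<forall>a b. mult a b \<le> p \<longrightarrow> a \<le> p \<or> b \<le> \<delta> p)"

definition delta_primaryM ::
  "('a::complete_lattice \<Rightarrow> 'm::complete_lattice \<Rightarrow> 'm) \<Rightarrow> ('a \<Rightarrow> 'a) \<Rightarrow> 'm \<Rightarrow> bool" where
  "delta_primaryM act \<delta> P \<longleftrightarrow>
     P < top \<and> (\<forall>A a. act a A \<le> P \<longrightarrow> A \<le> P \<or> a \<le> \<delta> (colonM act P top))"

end

theory Submission
  imports Defs
begin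

lemma ml_comm: "mult_lattice mult \<Longrightarrow> mult a b = mult b a" by (simp add: mult_lattice_def)
lemma ml_assoc: "mult_lattice mult \<Longrightarrow> mult (mult a b) c = mult a (mult b c)" unfolding mult_lattice_def by blast
lemma ml_Sup: "mult_lattice mult \<Longrightarrow> mult a (Sup S) = Sup (mult a ` S)" by (simp add: mult_lattice_def)
lemma ml_top: "mult_lattice mult \<Longrightarrow> mult top a = a" by (simp add: mult_lattice_def)
lemma ml_sup: "mult_lattice mult \<Longrightarrow> mult a (sup b c) = sup (mult a b) (mult a c)"
  using ml_Sup[of mult a "{b,c}"] by simp
lemma ml_mono: "mult_lattice mult \<Longrightarrow> b \<le> c \<Longrightarrow> mult a b \<le> mult a c"
  by (metis ml_sup sup.absorb2 sup.cobounded1)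
lemma ml_le: "mult_lattice mult \<Longrightarrow> mult a b \<le> a"
  by (metis ml_comm ml_mono ml_top top_greatest)
lemma ml_le2: "mult_lattice mult \<Longrightarrow> mult a b \<le> b"
  by (metis ml_comm ml_le)

lemma lm_Sup1: "lattice_module mult act \<Longrightarrow> act (Sup S) A = Sup ((\<lambda>a. act a A) ` S)"
  by (simp add: lattice_module_def)
lemma lm_Sup2: "lattice_module mult act \<Longrightarrow> act a (Sup T) = Sup (act a ` T)"
  by (simp add: lattice_module_def)
lemma lm_mult: "lattice_module mult act \<Longrightarrow> act (mult a b) A = act a (act b A)"
  by (simp add: lattice_module_def)
lemma lm_top: "lattice_module mult act \<Longrightarrow> act top A = A"
  by (simp add: lattice_module_def)
lemma act_mono2: "lattice_module mult act \<Longrightarrow> A \<le> B \<Longrightarrow> act a A \<le> act a B"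
proof -
  assume M: "lattice_module mult act" and "A \<le> B"
  then have "act a B = act a (Sup {A,B})" by (simp add: sup.absorb2)
  also have "\<dots> = sup (act a A) (act a B)" using lm_Sup2[OF M, of a "{A,B}"] by simp
  finally show ?thesis by (metis sup.cobounded1)
qed
lemma act_mono1: "lattice_module mult act \<Longrightarrow> a \<le> b \<Longrightarrow> act a A \<le> act b A"
proof -
  assume M: "lattice_module mult act" and "a \<le> b"
  then have "act b A = act (Sup {a,b}) A" by (simp add: sup.absorb2)
  also have "\<dots> = sup (act a A) (act b A)" using lm_Sup1[OF M, of "{a,b}" A] by simp
  finally show ?thesis by (metis sup.cobounded1)
qed
lemma act_colon: "lattice_module mult act \<Longrightarrow> act (colonM act A B) B \<le> A"
proof -
  assume M: "lattice_module mult act"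
  have "act (colonM act A B) B = (SUP x\<in>{x. act x B \<le> A}. act x B)"
    unfolding colonM_def by (rule lm_Sup1[OF M])
  also have "\<dots> \<le> A" by (rule SUP_least) simp
  finally show ?thesis .
qed
lemma colonM_iff: "lattice_module mult act \<Longrightarrow> x \<le> colonM act A B \<longleftrightarrow> act x B \<le> A"
proof
  assume M: "lattice_module mult act" and "x \<le> colonM act A B"
  then have "act x B \<le> act (colonM act A B) B" by (rule act_mono1)
  also have "\<dots> \<le> A" by (rule act_colon[OF M])
  finally show "act x B \<le> A" .
next
  assume "act x B \<le> A"
  then show "x \<le> colonM act A B" unfolding colonM_def by (simp add: Sup_upper)
qed

lemma fin_lemma:
  fixes mult :: "'a::complete_lattice \<Rightarrow> 'a \<Rightarrow> 'a" and t :: 'a and g :: "'b \<Rightarrow> 'a"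
  assumes ml: "mult_lattice mult" and F: "finite F"
  shows "(\<forall>N\<in>F. sup t (g N) = top) \<Longrightarrow> sup t (Inf (g ` F)) = top"
  using F
proof (induction F rule: finite_induct)
  case empty then show ?case by simp
next
  case (insert n F)
  define R where "R = Inf (g ` F)"
  have h1: "sup t (g n) = top" using insert by simp
  have h2: "sup t R = top" using insert R_def by simp
  have "top = mult (sup t (g n)) (sup t R)" using h1 h2 ml_top[OF ml] by simp
  also have "\<dots> = sup (mult (sup t (g n)) t) (mult (sup t (g n)) R)" using ml_sup[OF ml] by simp
  also have "mult (sup t (g n)) R = sup (mult t R) (mult (g n) R)"
    using ml_sup[OF ml] ml_comm[OF ml] by metis
  finally have e: "top = sup (mult (sup t (g n)) t) (sup (mult t R) (mult (g n) R))" .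
  have "mult (sup t (g n)) t \<le> t" using ml_le2[OF ml] .
  moreover have "mult t R \<le> t" using ml_le[OF ml] .
  moreover have "mult (g n) R \<le> inf (g n) R" using ml_le[OF ml] ml_le2[OF ml] by simp
  ultimately have "top \<le> sup t (inf (g n) R)"
    by (subst e) (meson inf_sup_ord order_trans sup_least sup_mono)
  then show ?case by (simp add: R_def top_le)
qed

lemma cancellation:
  fixes mult :: "'a::complete_lattice \<Rightarrow> 'a \<Rightarrow> 'a"
    and act :: "'a \<Rightarrow> 'm::complete_lattice \<Rightarrow> 'm"
  assumes ml: "mult_lattice mult"
    and M: "lattice_module mult act"
    and faith: "faithful act"
    and mult_mod: "multiplication_module act"
    and PGM: "PG_module act"
    and cpt: "compact_el (top::'m)"
    and le: "act x top \<le> act a top"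
  shows "x \<le> a"
proof -
  have cI: "act (colonM act N top) top = N" for N
  proof -
    obtain b where b: "N = act b top" using mult_mod unfolding multiplication_module_def by blast
    have "b \<le> colonM act N top" using colonM_iff[OF M] b by simp
    then have "N \<le> act (colonM act N top) top" using b act_mono1[OF M] by simp
    then show ?thesis using act_colon[OF M, of N top] by simp
  qed
  define \<theta> where "\<theta> = Sup {colonM act N top | N. principalM act N}"
  obtain S where S: "\<forall>s\<in>S. principalM act s" "(top::'m) = Sup S"
    using PGM unfolding PG_module_def by blast
  have thI: "act \<theta> top = top"
  proof -
    have "act \<theta> top = Sup ((\<lambda>c. act c top) ` {colonM act N top | N. principalM act N})"
      unfolding \<theta>_def using lm_Sup1[OF M] by blast
    also have "\<dots> = Sup {N. principalM act N}"
      using cI by (intro arg_cong[where f=Sup]) (auto simp: image_def)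
    finally have "act \<theta> top = Sup {N. principalM act N}" .
    moreover have "Sup S \<le> Sup {N. principalM act N}" using S(1) by (intro Sup_subset_mono) auto
    ultimately show ?thesis using S(2) by (simp add: top_le)
  qed
  have thN: "sup \<theta> (colonM act bot N) = top" if P: "principalM act N" for N
  proof -
    have "act \<theta> N = act \<theta> (act (colonM act N top) top)" using cI by simp
    also have "\<dots> = act (colonM act N top) (act \<theta> top)"
      using lm_mult[OF M] ml_comm[OF ml] by metis
    also have "\<dots> = N" using thI cI by simp
    finally have e: "act \<theta> N = N" .
    have "sup \<theta> (colonM act bot N) = colonM act (sup (act \<theta> N) bot) N"
      using P unfolding principalM_def by blast
    also have "\<dots> = colonM act N N" using e by simp
    also have "\<dots> = top" using colonM_iff[OF M, of top N N] lm_top[OF M] by (simp add: top_le)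
    finally show ?thesis .
  qed
  have "\<exists>F. F \<subseteq> S \<and> finite F \<and> top \<le> Sup F" using cpt S(2) unfolding compact_el_def by simp
  then obtain F where F: "F \<subseteq> S" "finite F" "(top::'m) \<le> Sup F" by blast
  have "sup \<theta> (Inf ((\<lambda>N. colonM act bot N) ` F)) = top"
    using fin_lemma[OF ml F(2)] thN S(1) F(1) by blast
  moreover have "Inf ((\<lambda>N. colonM act bot N) ` F) \<le> bot"
  proof -
    let ?y = "Inf ((\<lambda>N. colonM act bot N) ` F)"
    have "act ?y N \<le> bot" if "N \<in> F" for N
      using that colonM_iff[OF M] by (meson INF_lower)
    then have "act ?y (Sup F) \<le> bot" using lm_Sup2[OF M] by (simp add: SUP_least)
    then have "act ?y top \<le> bot" using F(3) by (metis top_le)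
    then have "?y \<le> colonM act bot top" using colonM_iff[OF M] by blast
    then show ?thesis using faith unfolding faithful_def by simp
  qed
  ultimately have th: "\<theta> = top" by (simp add: bot_unique)
  have key: "mult x c \<le> a" if cmem: "c \<in> {colonM act N top | N. principalM act N}" for c
  proof -
    obtain N where N: "c = colonM act N top" "principalM act N" using cmem by blast
    have cN: "act c top = N" using cI N by simp
    have "act x N = act c (act x top)"
      using cN lm_mult[OF M] ml_comm[OF ml] by metis
    also have "\<dots> \<le> act c (act a top)" using le act_mono2[OF M] by blast
    also have "\<dots> = act a N" using cN lm_mult[OF M] ml_comm[OF ml] by metis
    finally have "act x N \<le> sup (act a N) bot" by simp
    then have "x \<le> colonM act (sup (act a N) bot) N" using colonM_iff[OF M] by blast
    also have "\<dots> = sup a (colonM act bot N)" using N(2) unfolding principalM_def by metis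
    finally have "mult c x \<le> mult c (sup a (colonM act bot N))" using ml_mono[OF ml] by blast
    also have "\<dots> = sup (mult c a) (mult c (colonM act bot N))" using ml_sup[OF ml] by blast
    also have "mult c (colonM act bot N) \<le> bot"
    proof -
      have "act (mult c (colonM act bot N)) top = act (colonM act bot N) N"
        using cN lm_mult[OF M] ml_comm[OF ml] by metis
      also have "\<dots> \<le> bot" using act_colon[OF M] .
      finally have "mult c (colonM act bot N) \<le> colonM act bot top" using colonM_iff[OF M] by blast
      then show ?thesis using faith unfolding faithful_def by simp
    qed
    then have "sup (mult c a) (mult c (colonM act bot N)) \<le> mult c a" by (simp add: bot_unique)
    also have "mult c a \<le> a" using ml_le2[OF ml] .
    finally show ?thesis using ml_comm[OF ml] by metis
  qed
  have "mult x \<theta> = Sup (mult x ` {colonM act N top | N. principalM act N})"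
    unfolding \<theta>_def using ml_Sup[OF ml] by blast
  also have "\<dots> \<le> a" by (rule SUP_least) (rule key)
  finally show ?thesis using th ml_top[OF ml] ml_comm[OF ml] by metis
qed

theorem theorem4p14:
  fixes mult :: "'a::complete_lattice \<Rightarrow> 'a \<Rightarrow> 'a"
    and act :: "'a \<Rightarrow> 'm::complete_lattice \<Rightarrow> 'm"
    and N :: 'm
    and \<delta> :: "'a \<Rightarrow> 'a"
  assumes L: "std_mult_lattice mult"
    and PG: "PG_lattice mult"
    and M: "lattice_module mult act"
    and faith: "faithful act"
    and mult_mod: "multiplication_module act"
    and PGM: "PG_module act"
    and cpt: "compact_el (top::'m)"
    and proper: "N < top"
    and exp: "expansion_fun \<delta>"
  shows "(delta_primaryM act \<delta> N \<longleftrightarrow> delta_primaryL mult \<delta> (colonM act N top))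
       \<and> (delta_primaryL mult \<delta> (colonM act N top) \<longleftrightarrow>
            (\<exists>q. delta_primaryL mult \<delta> q \<and> N = act q top))"
proof -
  have ml: "mult_lattice mult" using L unfolding std_mult_lattice_def by simp
  define c where "c = colonM act N top"
  have cI: "act c top = N"
  proof -
    obtain b where b: "N = act b top" using mult_mod unfolding multiplication_module_def by blast
    have "b \<le> c" using colonM_iff[OF M] b c_def by simp
    then have "N \<le> act c top" using b act_mono1[OF M] by simp
    then show ?thesis using act_colon[OF M, of N top] c_def by simp
  qed
  have ciff: "x \<le> c \<longleftrightarrow> act x top \<le> N" for x using colonM_iff[OF M] c_def by simp
  have c_prop: "c < top"
  proof (rule ccontr)
    assume "\<not> c < top"
    then have "c = top" using top.not_eq_extremum by blast
    then have "N = top" using cI lm_top[OF M] by simp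
    then show False using proper by simp
  qed
  have A: "delta_primaryM act \<delta> N \<longleftrightarrow> delta_primaryL mult \<delta> c"
  proof
    assume d: "delta_primaryM act \<delta> N"
    show "delta_primaryL mult \<delta> c" unfolding delta_primaryL_def
    proof (intro conjI c_prop allI impI)
      fix a b assume "mult a b \<le> c"
      then have "mult b a \<le> c" using ml_comm[OF ml] by metis
      then have "act b (act a top) \<le> N" using ciff lm_mult[OF M] by metis
      then have "act a top \<le> N \<or> b \<le> \<delta> c" using d c_def unfolding delta_primaryM_def by blast
      then show "a \<le> c \<or> b \<le> \<delta> c" using ciff by blast
    qed
  next
    assume d: "delta_primaryL mult \<delta> c"
    show "delta_primaryM act \<delta> N" unfolding delta_primaryM_def
    proof (intro conjI proper allI impI)
      fix A a assume h: "act a A \<le> N"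
      obtain b where b: "A = act b top" using mult_mod unfolding multiplication_module_def by blast
      have "mult b a \<le> c" using ciff h b lm_mult[OF M] ml_comm[OF ml] by metis
      then have "b \<le> c \<or> a \<le> \<delta> c" using d unfolding delta_primaryL_def by blast
      then show "A \<le> N \<or> a \<le> \<delta> (colonM act N top)" using ciff b c_def by blast
    qed
  qed
  have B: "delta_primaryL mult \<delta> c \<longleftrightarrow> (\<exists>q. delta_primaryL mult \<delta> q \<and> N = act q top)"
  proof
    assume "delta_primaryL mult \<delta> c"
    then show "\<exists>q. delta_primaryL mult \<delta> q \<and> N = act q top" using cI by metis
  next
    assume "\<exists>q. delta_primaryL mult \<delta> q \<and> N = act q top"
    then obtain q where q: "delta_primaryL mult \<delta> q" "N = act q top" by blast
    have "c \<le> q"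
      using cancellation[OF ml M faith mult_mod PGM cpt, of c q] cI q(2) by simp
    moreover have "q \<le> c" using ciff q(2) by simp
    ultimately show "delta_primaryL mult \<delta> c" using q(1) by simp
  qed
  show ?thesis using A B c_def by simp
qed

end
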